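(* Let $\varphi^{(0)}=a^{(0)}_kq^k+\sum_{j\ge k+1}a^{(0)}_jq^j$ and $\psi=b_0+b_1q+\sum_{j\ge2}b_jq^j$ be formal power series with integer coefficients, where $a^{(0)}_k\ge1$, $b_0,b_1\ge1$ and $b_j\ge0$ for all $j\ge2$. For $n\ge0$ let $\varphi^{(n)}=\varphi^{(0)}\psi^n=\sum_{j\ge k}a^{(n)}_jq^j$ and $$M_n=\max\{m\in\mathbb N: a^{(n)}_j>0\text{ for all }k\le j\le m\}.$$ Then the sequence $(M_n)_{n\ge0}$ is nondecreasing and unbounded. *)

theory Defs
  imports "HOL-Computational_Algebra.Formal_Power_Series" "HOL-Library.Extended_Nat"
begin

text \<open>M k f = max {m in N : coefficient j of f is > 0 for all k <= j <= m},
  taken in enat so that it is infinity when all coefficients from k on are positive.\<close>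
definition M_index :: "nat \<Rightarrow> int fps \<Rightarrow> enat" where
  "M_index k f = Sup {enat m | m. \<forall>j. k \<le> j \<and> j \<le> m \<longrightarrow> fps_nth f j > 0}"

end

theory Submission
  imports Defs
begin

lemma psi_nonneg:
  fixes psi :: "int fps"
  assumes "fps_nth psi 0 \<ge> 1" "fps_nth psi 1 \<ge> 1" "\<forall>j\<ge>2. fps_nth psi j \<ge> 0"
  shows "fps_nth psi j \<ge> 0"
  using assms by (cases "j \<ge> 2") (auto simp: not_le less_2_cases_iff)

lemma pow_nonneg:
  fixes psi :: "int fps"
  assumes "\<And>j. fps_nth psi j \<ge> 0"
  shows "fps_nth (psi ^ n) d \<ge> 0"
proof (induction n arbitrary: d)
  case 0
  then show ?case by (simp add: fps_one_nth)
next
  case (Suc n)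
  show ?case unfolding power_Suc fps_mult_nth
    by (intro sum_nonneg mult_nonneg_nonneg assms Suc)
qed

lemma pow_pos:
  fixes psi :: "int fps"
  assumes nn: "\<And>j. fps_nth psi j \<ge> 0" and b0: "fps_nth psi 0 \<ge> 1" and b1: "fps_nth psi 1 \<ge> 1"
  shows "d \<le> n \<Longrightarrow> fps_nth (psi ^ n) d > 0"
proof (induction n arbitrary: d)
  case 0
  then show ?case by (simp add: fps_one_nth)
next
  case (Suc n)
  have nn2: "\<And>i e. fps_nth psi i * fps_nth (psi ^ n) e \<ge> 0"
    using nn pow_nonneg[OF nn] by (simp add: mult_nonneg_nonneg)
  show ?case
  proof (cases d)
    case 0
    have "fps_nth (psi ^ Suc n) d = fps_nth psi 0 * fps_nth (psi ^ n) 0"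
      unfolding power_Suc fps_mult_nth using 0 by simp
    moreover have "fps_nth (psi ^ n) 0 > 0" using Suc.IH by simp
    ultimately show ?thesis using b0 by simp
  next
    case (Suc d0)
    have "fps_nth psi 1 * fps_nth (psi ^ n) (d - 1) \<le> fps_nth (psi ^ Suc n) d"
      unfolding power_Suc fps_mult_nth
      by (rule member_le_sum[where i=1, simplified]) (use Suc nn2 in auto)
    moreover have "fps_nth (psi ^ n) (d - 1) > 0" using Suc.IH Suc.prems Suc by simp
    ultimately show ?thesis using b1
      by (smt (verit) mult_pos_pos)
  qed
qed

lemma low_zero:
  fixes phi h :: "int fps"
  assumes "\<forall>j<k. fps_nth phi j = 0" "j < k"
  shows "fps_nth (phi * h) j = 0"
  unfolding fps_mult_nth using assms by (auto intro!: sum.neutral)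

lemma deriv_bound:
  fixes psi :: "int fps"
  assumes nn: "\<And>j. fps_nth psi j \<ge> 0" and d: "d \<ge> 1"
  shows "of_nat (Suc n) * fps_nth psi 1 * fps_nth (psi ^ n) (d - 1) \<le> of_nat d * fps_nth (psi ^ Suc n) d"
proof -
  have e: "fps_nth (fps_deriv (psi ^ Suc n)) (d - 1) = of_nat d * fps_nth (psi ^ Suc n) d"
    using d by (simp only: fps_deriv_nth) (simp add: of_nat_diff)
  have "fps_nth (fps_deriv (psi ^ Suc n)) (d - 1) =
      of_nat (Suc n) * fps_nth (fps_deriv psi * psi ^ n) (d - 1)"
    by (simp only: fps_deriv_power fps_mult_left_const_nth mult.assoc diff_Suc_1)
  moreover have "fps_nth psi 1 * fps_nth (psi ^ n) (d - 1) \<le> fps_nth (fps_deriv psi * psi ^ n) (d - 1)"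
  proof -
    have nn2: "\<And>i e. fps_nth (fps_deriv psi) i * fps_nth (psi ^ n) e \<ge> 0"
      using nn pow_nonneg[OF nn] by (simp add: mult_nonneg_nonneg fps_deriv_nth)
    have "fps_nth (fps_deriv psi) 0 * fps_nth (psi ^ n) (d - 1 - 0) \<le> fps_nth (fps_deriv psi * psi ^ n) (d - 1)"
      unfolding fps_mult_nth
      by (rule member_le_sum) (use nn2 in auto)
    then show ?thesis by (simp add: fps_deriv_nth)
  qed
  ultimately show ?thesis using e
    by (smt (verit, best) mult.assoc mult_left_mono of_nat_0_le_iff)
qed

lemma ratio:
  fixes psi :: "int fps"
  assumes nn: "\<And>j. fps_nth psi j \<ge> 0" and b1: "fps_nth psi 1 \<ge> 1"
  shows "\<exists>N. \<forall>n\<ge>N. \<forall>e<d. of_nat L * fps_nth (psi ^ n) e \<le> fps_nth (psi ^ n) d"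
proof (induction d arbitrary: L)
  case 0
  then show ?case by simp
next
  case (Suc d0)
  let ?c = "\<lambda>n e. fps_nth (psi ^ n) e"
  obtain N0 where N0: "\<And>n e. n \<ge> N0 \<Longrightarrow> e < d0 \<Longrightarrow> ?c n e \<le> ?c n d0"
    using Suc.IH[of 1] by auto
  define Bm where "Bm = (\<Sum>i=0..d0. fps_nth psi i)"
  have Bm0: "Bm \<ge> 0" unfolding Bm_def by (intro sum_nonneg nn)
  have psiB: "fps_nth psi i \<le> Bm" if "i \<le> d0" for i
    unfolding Bm_def by (rule member_le_sum) (use that nn in auto)
  define N where "N = N0 + 1 + L * (d0+1) * (d0+1) * nat Bm"
  have "\<forall>n\<ge>N. \<forall>e<Suc d0. of_nat L * ?c n e \<le> ?c n (Suc d0)"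
  proof (intro allI impI)
    fix n e assume n: "n \<ge> N" and e: "e < Suc d0"
    obtain m where m: "n = Suc m" using n N_def by (cases n) auto
    have mN: "m \<ge> N0" using n m N_def by auto
    have cm0: "?c m d0 \<ge> 0" by (rule pow_nonneg[OF nn])
    have le_d0: "?c m e' \<le> ?c m d0" if "e' \<le> d0" for e'
      using N0[OF mN, of e'] that by (cases "e' = d0") auto
    have "?c (Suc m) e = (\<Sum>i=0..e. fps_nth psi i * ?c m (e - i))"
      unfolding power_Suc fps_mult_nth by simp
    also have "\<dots> \<le> (\<Sum>i=0..e. Bm * ?c m d0)"
    proof (rule sum_mono)
      fix i assume i: "i \<in> {0..e}"
      show "fps_nth psi i * ?c m (e - i) \<le> Bm * ?c m d0"
        by (rule mult_mono) (use i e psiB le_d0 Bm0 nn pow_nonneg[OF nn] in auto)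
    qed
    also have "\<dots> = of_nat (e+1) * Bm * ?c m d0" by simp
    also have "\<dots> \<le> of_nat (d0+1) * Bm * ?c m d0"
      using e Bm0 cm0 by (intro mult_right_mono) auto
    finally have up: "?c (Suc m) e \<le> of_nat (d0+1) * Bm * ?c m d0" .
    have dv: "of_nat (Suc m) * fps_nth psi 1 * ?c m d0 \<le> of_nat (Suc d0) * ?c (Suc m) (Suc d0)"
      using deriv_bound[OF nn, of "Suc d0" m] by simp
    have big: "of_nat L * of_nat (d0+1) * of_nat (d0+1) * Bm \<le> (of_nat (Suc m) :: int)"
    proof -
      have "of_nat L * of_nat (d0+1) * of_nat (d0+1) * Bm = int (L * (d0+1) * (d0+1) * nat Bm)"
        using Bm0 by (simp add: algebra_simps)
      also have "\<dots> \<le> int (Suc m)" unfolding of_nat_le_iff using n m N_def by linarith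
      finally show ?thesis by simp
    qed
    have "of_nat (d0+1) * (of_nat L * ?c (Suc m) e) \<le> of_nat (d0+1) * (of_nat L * (of_nat (d0+1) * Bm * ?c m d0))"
      using up by (intro mult_left_mono) auto
    also have "\<dots> = (of_nat L * of_nat (d0+1) * of_nat (d0+1) * Bm) * ?c m d0" by (simp add: algebra_simps)
    also have "\<dots> \<le> of_nat (Suc m) * ?c m d0" using big cm0 by (rule mult_right_mono)
    also have "\<dots> \<le> of_nat (Suc m) * fps_nth psi 1 * ?c m d0"
    proof -
      have "?c m d0 \<le> fps_nth psi 1 * ?c m d0" using mult_right_mono[OF b1 cm0] by simp
      then show ?thesis unfolding mult.assoc by (rule mult_left_mono) simp
    qed
    also have "\<dots> \<le> of_nat (d0+1) * ?c (Suc m) (Suc d0)" using dv by simp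
    finally have "of_nat (d0+1) * (of_nat L * ?c (Suc m) e) \<le> of_nat (d0+1) * ?c (Suc m) (Suc d0)" .
    then have "of_nat L * ?c (Suc m) e \<le> ?c (Suc m) (Suc d0)"
      by (subst (asm) mult_le_cancel_left_pos) auto
    then show "of_nat L * ?c n e \<le> ?c n (Suc d0)" using m by simp
  qed
  then show ?case by blast
qed

theorem lemma7p2:
  fixes phi psi :: "int fps" and k :: nat
  assumes "\<forall>j<k. fps_nth phi j = 0"
    and "fps_nth phi k \<ge> 1"
    and "fps_nth psi 0 \<ge> 1" and "fps_nth psi 1 \<ge> 1"
    and "\<forall>j\<ge>2. fps_nth psi j \<ge> 0"
  shows "mono (\<lambda>n. M_index k (phi * psi ^ n)) \<and>
         (\<forall>B::nat. \<exists>n. enat B \<le> M_index k (phi * psi ^ n))"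
proof
  have nn: "\<And>j. fps_nth psi j \<ge> 0" using psi_nonneg assms(3-5) by blast
  let ?f = "\<lambda>n. phi * psi ^ n"
  have lowz: "\<And>n j. j < k \<Longrightarrow> fps_nth (?f n) j = 0" using low_zero[OF assms(1)] by blast
  show "mono (\<lambda>n. M_index k (phi * psi ^ n))"
    unfolding mono_iff_le_Suc
  proof
    fix n
    show "M_index k (?f n) \<le> M_index k (?f (Suc n))"
      unfolding M_index_def
    proof (rule Sup_subset_mono, safe)
      fix m assume H: "\<forall>j. k \<le> j \<and> j \<le> m \<longrightarrow> 0 < fps_nth (?f n) j"
      have "0 < fps_nth (?f (Suc n)) j" if j: "k \<le> j" "j \<le> m" for j
      proof -
        have eq: "?f (Suc n) = ?f n * psi" by (simp add: algebra_simps)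
        have tnn: "0 \<le> fps_nth (?f n) i * fps_nth psi (j - i)" if "i \<in> {0..j}" for i
        proof (cases "i < k")
          case True then show ?thesis using lowz by simp
        next
          case False
          then have "0 < fps_nth (?f n) i" using H that j by auto
          then show ?thesis using nn by simp
        qed
        have "fps_nth (?f n) j * fps_nth psi (j - j) \<le> fps_nth (?f (Suc n)) j"
          unfolding eq fps_mult_nth[of "?f n" psi] 
          apply (rule member_le_sum)
            apply simp
           apply (rule tnn)
           apply blast
          apply simp
          done
        moreover have "0 < fps_nth (?f n) j * fps_nth psi 0" using H j assms(3) by simp
        ultimately show ?thesis by simp
      qed
      then show "\<exists>m'. enat m = enat m' \<and> (\<forall>j. k \<le> j \<and> j \<le> m' \<longrightarrow> 0 < fps_nth (?f (Suc n)) j)"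
        by blast
    qed
  qed
  show "\<forall>B::nat. \<exists>n. enat B \<le> M_index k (phi * psi ^ n)"
  proof
    fix B :: nat
    let ?c = "\<lambda>n e. fps_nth (psi ^ n) e"
    define A where "A = (\<Sum>i=0..B. \<bar>fps_nth phi i\<bar>)"
    have A0: "A \<ge> 0" unfolding A_def by (intro sum_nonneg) auto
    have phiA: "\<bar>fps_nth phi i\<bar> \<le> A" if "i \<le> B" for i
      unfolding A_def by (rule member_le_sum) (use that in auto)
    define L where "L = nat A * (B+1) + 1"
    have "\<forall>d\<in>{..B}. eventually (\<lambda>n. \<forall>e<d. of_nat L * ?c n e \<le> ?c n d) sequentially"
      using ratio[OF nn assms(4)] unfolding eventually_sequentially by blast
    then have "eventually (\<lambda>n. \<forall>d\<in>{..B}. \<forall>e<d. of_nat L * ?c n e \<le> ?c n d) sequentially"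
      by (rule eventually_ball_finite[rotated]) simp
    then obtain N where N: "\<And>n d e. n \<ge> N \<Longrightarrow> d \<le> B \<Longrightarrow> e < d \<Longrightarrow> of_nat L * ?c n e \<le> ?c n d"
      unfolding eventually_sequentially by blast
    define n where "n = max N B"
    have pos: "\<forall>j. k \<le> j \<and> j \<le> B \<longrightarrow> 0 < fps_nth (?f n) j"
    proof safe
      fix j assume j: "k \<le> j" "j \<le> B"
      define d where "d = j - k"
      have cd: "?c n d > 0" using pow_pos[OF nn assms(3,4)] d_def j n_def by simp
      have tb: "- (A * ?c n d) \<le> of_nat L * (fps_nth phi i * ?c n (j - i))" if i: "i \<in> {0..j} - {k}" for i
      proof (cases "i < k")
        case True then show ?thesis using assms(1) A0 cd by simp
      next
        case False
        then have ik: "k < i" "i \<le> j" using i by auto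
        have r: "of_nat L * ?c n (j - i) \<le> ?c n d"
          using N[of n d "j - i"] n_def d_def j ik by simp
        have cn: "?c n (j - i) \<ge> 0" by (rule pow_nonneg[OF nn])
        have "- (A * ?c n d) \<le> - (\<bar>fps_nth phi i\<bar> * ?c n d)"
          using phiA[of i] ik j cd by (simp add: mult_right_mono)
        also have "\<dots> \<le> - (\<bar>fps_nth phi i\<bar> * (of_nat L * ?c n (j - i)))"
          using r by (simp add: mult_left_mono)
        also have "\<dots> \<le> of_nat L * (fps_nth phi i * ?c n (j - i))"
        proof -
          have "\<bar>of_nat L * (fps_nth phi i * ?c n (j - i))\<bar> = \<bar>fps_nth phi i\<bar> * (of_nat L * ?c n (j - i))"
            using cn by (simp add: abs_mult)
          then show ?thesis by linarith
        qed
        finally show ?thesis .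
      qed
      have "fps_nth (?f n) j = (\<Sum>i=0..j. fps_nth phi i * ?c n (j - i))"
        by (simp add: fps_mult_nth)
      also have "\<dots> = fps_nth phi k * ?c n d + (\<Sum>i\<in>{0..j}-{k}. fps_nth phi i * ?c n (j - i))"
        using j d_def by (subst sum.remove[of _ k]) auto
      finally have eq: "fps_nth (?f n) j = \<dots>" .
      have "of_nat L * (\<Sum>i\<in>{0..j}-{k}. fps_nth phi i * ?c n (j - i))
          = (\<Sum>i\<in>{0..j}-{k}. of_nat L * (fps_nth phi i * ?c n (j - i)))"
        by (simp add: sum_distrib_left)
      also have "\<dots> \<ge> of_nat (card ({0..j}-{k})) * (- (A * ?c n d))"
        by (rule sum_bounded_below) (rule tb)
      finally have s1: "of_nat L * (\<Sum>i\<in>{0..j}-{k}. fps_nth phi i * ?c n (j - i)) \<ge> of_nat j * (- (A * ?c n d))"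
        using j by simp
      have s2: "of_nat j * (A * ?c n d) \<le> of_nat B * (A * ?c n d)"
        using j A0 cd by (intro mult_right_mono) auto
      have s3: "of_nat L * ?c n d \<le> of_nat L * (fps_nth phi k * ?c n d)"
      proof -
        have "?c n d \<le> fps_nth phi k * ?c n d" using mult_right_mono[OF assms(2), of "?c n d"] cd by simp
        then show ?thesis by (rule mult_left_mono) simp
      qed
      have Lv: "(of_nat L :: int) = A * (of_nat B + 1) + 1" using A0 L_def by (simp add: algebra_simps)
      have "of_nat L * fps_nth (?f n) j > 0"
      proof -
        have "of_nat L * fps_nth (?f n) j \<ge> of_nat L * ?c n d - of_nat B * (A * ?c n d)"
          unfolding eq distrib_left using s1 s2 s3 by linarith
        moreover have "of_nat L * ?c n d - of_nat B * (A * ?c n d) = ?c n d + A * ?c n d"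
          unfolding Lv by (simp add: algebra_simps)
        moreover have "A * ?c n d \<ge> 0" using A0 cd by simp
        ultimately show ?thesis using cd by linarith
      qed
      then show "0 < fps_nth (?f n) j"
        by (simp add: zero_less_mult_iff)
    qed
    show "\<exists>n. enat B \<le> M_index k (phi * psi ^ n)"
      unfolding M_index_def using pos by (intro exI[of _ n] Sup_upper) blast
  qed
qed

end
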